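(* Let $[0,1]$ be the closed real unit interval, regarded as a complete lattice with $\sup$ and $\inf$, and let $\mathbf L=[0,1]\times\{0,1\}$ be the product lattice (componentwise order, $0<1$). Then every element of $\mathbf L$ is a non-generator, except for $(0,1)$ and $(1,0)$. Hence the set $\Gamma$ of non-generators of $\mathbf L$ is not a complete sublattice, and the complete sublattice generated by $\Gamma$ is all of $L$.
   Context: A complete sublattice of a complete lattice $\mathbf L$ is a subset $T\subseteq L$ closed under arbitrary meets and joins computed in $L$, including those of the empty set (so $T$ contains the minimum and maximum of $L$). For $X\subseteq L$, $\langle X\rangle$ is the intersection of all complete sublattices containing $X$, and $\langle X,a\rangle=\langle X\cup\{a\}\rangle$. An element $a$ is a non-generator if for every $X\subseteq L$, $\langle X,a\rangle=L$ implies $\langle X\rangle=L$. *)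

theory Defs
  imports Main "HOL.Real"
begin

text \<open>Joins/meets computed in A are least upper / greatest
lower bounds in A (for S = {} these are the minimum / maximum of A).\<close>

definition is_lub :: "'a set \<Rightarrow> ('a \<Rightarrow> 'a \<Rightarrow> bool) \<Rightarrow> 'a set \<Rightarrow> 'a \<Rightarrow> bool" where
  "is_lub A le S x \<longleftrightarrow> x \<in> A \<and> (\<forall>s\<in>S. le s x) \<and> (\<forall>y\<in>A. (\<forall>s\<in>S. le s y) \<longrightarrow> le x y)"

definition is_glb :: "'a set \<Rightarrow> ('a \<Rightarrow> 'a \<Rightarrow> bool) \<Rightarrow> 'a set \<Rightarrow> 'a \<Rightarrow> bool" where
  "is_glb A le S x \<longleftrightarrow> x \<in> A \<and> (\<forall>s\<in>S. le x s) \<and> (\<forall>y\<in>A. (\<forall>s\<in>S. le y s) \<longrightarrow> le y x)"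

definition complete_sublattice :: "'a set \<Rightarrow> ('a \<Rightarrow> 'a \<Rightarrow> bool) \<Rightarrow> 'a set \<Rightarrow> bool" where
  "complete_sublattice A le T \<longleftrightarrow> T \<subseteq> A \<and>
     (\<forall>S. S \<subseteq> T \<longrightarrow> (\<forall>x. is_lub A le S x \<longrightarrow> x \<in> T) \<and> (\<forall>x. is_glb A le S x \<longrightarrow> x \<in> T))"

definition generated :: "'a set \<Rightarrow> ('a \<Rightarrow> 'a \<Rightarrow> bool) \<Rightarrow> 'a set \<Rightarrow> 'a set" where
  "generated A le X = \<Inter>{T. complete_sublattice A le T \<and> X \<subseteq> T}"

definition non_generator :: "'a set \<Rightarrow> ('a \<Rightarrow> 'a \<Rightarrow> bool) \<Rightarrow> 'a \<Rightarrow> bool" where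
  "non_generator A le a \<longleftrightarrow>
     (\<forall>X. X \<subseteq> A \<longrightarrow> generated A le (insert a X) = A \<longrightarrow> generated A le X = A)"

text \<open>The lattice [0,1] \<times> {0,1}; the two-element chain {0,1} is represented
by bool with False = 0 < True = 1. Order is componentwise.\<close>

definition L :: "(real \<times> bool) set" where
  "L = {0..1} \<times> UNIV"

definition leL :: "real \<times> bool \<Rightarrow> real \<times> bool \<Rightarrow> bool" where
  "leL p q \<longleftrightarrow> fst p \<le> fst q \<and> (snd p \<longrightarrow> snd q)"

end

theory Submission
  imports Defs "HOL-Analysis.Analysis"
begin

lemma cs_closed_lub: "complete_sublattice A le T \<Longrightarrow> Y \<subseteq> T \<Longrightarrow> is_lub A le Y x \<Longrightarrow> x \<in> T"
  unfolding complete_sublattice_def by blast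
lemma cs_closed_glb: "complete_sublattice A le T \<Longrightarrow> Y \<subseteq> T \<Longrightarrow> is_glb A le Y x \<Longrightarrow> x \<in> T"
  unfolding complete_sublattice_def by blast

lemma gen_sub: "complete_sublattice A le T \<Longrightarrow> X \<subseteq> T \<Longrightarrow> generated A le X \<subseteq> T"
  unfolding generated_def by blast
lemma gen_sup: "X \<subseteq> generated A le X"
  unfolding generated_def by blast
lemma cs_full: "complete_sublattice A le A"
  unfolding complete_sublattice_def is_lub_def is_glb_def by blast
lemma gen_cs: "X \<subseteq> A \<Longrightarrow> complete_sublattice A le (generated A le X)"
proof -
  assume X: "X \<subseteq> A"
  have sub: "generated A le X \<subseteq> A" using gen_sub[OF cs_full X] .
  show ?thesis unfolding complete_sublattice_def
  proof (intro conjI sub allI impI)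
    fix S x assume S: "S \<subseteq> generated A le X" and l: "is_lub A le S x"
    show "x \<in> generated A le X" unfolding generated_def
    proof
      fix T assume "T \<in> {T. complete_sublattice A le T \<and> X \<subseteq> T}"
      then have T: "complete_sublattice A le T" "X \<subseteq> T" by auto
      have "S \<subseteq> T" using S gen_sub[OF T] by blast
      then show "x \<in> T" using cs_closed_lub[OF T(1) _ l] by blast
    qed
  next
    fix S x assume S: "S \<subseteq> generated A le X" and l: "is_glb A le S x"
    show "x \<in> generated A le X" unfolding generated_def
    proof
      fix T assume "T \<in> {T. complete_sublattice A le T \<and> X \<subseteq> T}"
      then have T: "complete_sublattice A le T" "X \<subseteq> T" by auto
      have "S \<subseteq> T" using S gen_sub[OF T] by blast
      then show "x \<in> T" using cs_closed_glb[OF T(1) _ l] by blast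
    qed
  qed
qed

lemma bdd01: "Z \<subseteq> {0..1::real} \<Longrightarrow> bdd_above Z \<and> bdd_below Z"
  by (meson bdd_above_Icc bdd_below_Icc bdd_above_mono bdd_below_mono)

lemma lub_layer:
  assumes Z: "Z \<subseteq> {0..1}" "Z \<noteq> {}"
  shows "is_lub L leL ((\<lambda>u. (u,b)) ` Z) (Sup Z, b)"
proof -
  have bdd: "bdd_above Z" using bdd01[OF Z(1)] by simp
  have "Sup Z \<le> 1" using Z by (intro cSup_least) auto
  moreover have "0 \<le> Sup Z" using Z bdd by (meson atLeastAtMost_iff cSup_upper order_trans subset_iff ex_in_conv)
  ultimately show ?thesis using Z bdd unfolding is_lub_def L_def leL_def
    by (auto intro: cSup_upper cSup_least)
qed

lemma glb_layer:
  assumes Z: "Z \<subseteq> {0..1}" "Z \<noteq> {}"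
  shows "is_glb L leL ((\<lambda>u. (u,b)) ` Z) (Inf Z, b)"
proof -
  have bdd: "bdd_below Z" using bdd01[OF Z(1)] by simp
  have "0 \<le> Inf Z" using Z by (intro cInf_greatest) auto
  moreover have "Inf Z \<le> 1" using Z bdd by (meson atLeastAtMost_iff cInf_lower order_trans subset_iff ex_in_conv)
  ultimately show ?thesis using Z bdd unfolding is_glb_def L_def leL_def
    by (auto intro: cInf_lower cInf_greatest)
qed

lemma glb_TF: "u \<in> {0..1} \<Longrightarrow> q \<in> {0..1} \<Longrightarrow> is_glb L leL {(u,True),(q,False)} (min u q, False)"
  unfolding is_glb_def L_def leL_def by auto
lemma lub_FT: "u \<in> {0..1} \<Longrightarrow> p \<in> {0..1} \<Longrightarrow> is_lub L leL {(u,False),(p,True)} (max u p, True)"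
  unfolding is_lub_def L_def leL_def by auto

lemma lub_empty: "is_lub L leL {} (0,False)"
  unfolding is_lub_def L_def leL_def by auto
lemma glb_empty: "is_glb L leL {} (1,True)"
  unfolding is_glb_def L_def leL_def by auto

lemma lub_char:
  assumes S: "S \<subseteq> L" "S \<noteq> {}" and l: "is_lub L leL S x"
  shows "fst x = Sup (fst ` S)"
proof -
  have F: "fst ` S \<subseteq> {0..1}" "fst ` S \<noteq> {}" using S unfolding L_def by auto
  have bdd: "bdd_above (fst ` S)" using bdd01[OF F(1)] by simp
  have "is_lub L leL ((\<lambda>u. (u,True)) ` (fst ` S)) (Sup (fst ` S), True)" using lub_layer[OF F] .
  then have "(Sup (fst ` S), True) \<in> L" unfolding is_lub_def by blast
  moreover have "\<forall>s\<in>S. leL s (Sup (fst ` S), True)" using bdd unfolding leL_def by (auto intro: cSup_upper)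
  ultimately have "leL x (Sup (fst ` S), True)" using l unfolding is_lub_def by blast
  moreover have "Sup (fst ` S) \<le> fst x" using l F unfolding is_lub_def leL_def by (auto intro!: cSup_least)
  ultimately show ?thesis unfolding leL_def by auto
qed

lemma glb_char:
  assumes S: "S \<subseteq> L" "S \<noteq> {}" and l: "is_glb L leL S x"
  shows "fst x = Inf (fst ` S)"
proof -
  have F: "fst ` S \<subseteq> {0..1}" "fst ` S \<noteq> {}" using S unfolding L_def by auto
  have bdd: "bdd_below (fst ` S)" using bdd01[OF F(1)] by simp
  have "is_glb L leL ((\<lambda>u. (u,False)) ` (fst ` S)) (Inf (fst ` S), False)" using glb_layer[OF F] .
  then have "(Inf (fst ` S), False) \<in> L" unfolding is_glb_def by blast
  moreover have "\<forall>s\<in>S. leL (Inf (fst ` S), False) s" using bdd unfolding leL_def by (auto intro: cInf_lower)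
  ultimately have "leL (Inf (fst ` S), False) x" using l unfolding is_glb_def by blast
  moreover have "fst x \<le> Inf (fst ` S)" using l F unfolding is_glb_def leL_def by (auto intro!: cInf_greatest)
  ultimately show ?thesis unfolding leL_def by auto
qed

lemma prod_cs:
  assumes C: "closed C" "C \<subseteq> {0..1}" "0 \<in> C" "1 \<in> C"
  shows "complete_sublattice L leL (C \<times> UNIV)"
  unfolding complete_sublattice_def
proof (intro conjI allI impI)
  show "C \<times> UNIV \<subseteq> L" using C unfolding L_def by auto
next
  fix S x assume S: "S \<subseteq> C \<times> UNIV" and l: "is_lub L leL S x"
  show "x \<in> C \<times> UNIV"
  proof (cases "S = {}")
    case True
    then have "leL x (0,False)" using l lub_empty unfolding is_lub_def by blast
    then have "fst x = 0" using l unfolding is_lub_def leL_def L_def by auto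
    then show ?thesis using C by (cases x) auto
  next
    case False
    have SL: "S \<subseteq> L" using S C unfolding L_def by auto
    have "fst x = Sup (fst ` S)" using lub_char[OF SL False l] .
    moreover have F01: "fst ` S \<subseteq> {0..1}" using SL unfolding L_def by auto
    have "bdd_above (fst ` S)" using bdd01[OF F01] by simp
    then have "Sup (fst ` S) \<in> C"
      using S False C by (intro closed_subset_contains_Sup) auto
    ultimately show ?thesis by (cases x) auto
  qed
next
  fix S x assume S: "S \<subseteq> C \<times> UNIV" and l: "is_glb L leL S x"
  show "x \<in> C \<times> UNIV"
  proof (cases "S = {}")
    case True
    then have "leL (1,True) x" using l glb_empty unfolding is_glb_def by blast
    then have "fst x = 1" using l unfolding is_glb_def leL_def L_def by auto
    then show ?thesis using C by (cases x) auto
  next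
    case False
    have SL: "S \<subseteq> L" using S C unfolding L_def by auto
    have "fst x = Inf (fst ` S)" using glb_char[OF SL False l] .
    moreover have F01: "fst ` S \<subseteq> {0..1}" using SL unfolding L_def by auto
    have "bdd_below (fst ` S)" using bdd01[OF F01] by simp
    then have "Inf (fst ` S) \<in> C"
      using S False C by (intro closed_subset_contains_Inf) auto
    ultimately show ?thesis by (cases x) auto
  qed
qed

lemma J_cs:
  assumes d: "0 \<le> d" "d \<le> 1"
  shows "complete_sublattice L leL {x \<in> L. \<not> snd x \<longrightarrow> fst x \<le> d}"
  unfolding complete_sublattice_def
proof (intro conjI allI impI)
  show "{x \<in> L. \<not> snd x \<longrightarrow> fst x \<le> d} \<subseteq> L" by blast
next
  fix S x assume S: "S \<subseteq> {x \<in> L. \<not> snd x \<longrightarrow> fst x \<le> d}" and l: "is_lub L leL S x"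
  have xL: "x \<in> L" and ub: "\<forall>s\<in>S. leL s x" and least: "\<forall>y\<in>L. (\<forall>s\<in>S. leL s y) \<longrightarrow> leL x y"
    using l unfolding is_lub_def by blast+
  have "fst x \<le> d" if ns: "\<not> snd x"
  proof -
    have "leL s (d, False)" if s: "s \<in> S" for s
    proof -
      have "\<not> snd s" using ub s ns unfolding leL_def by blast
      then have "fst s \<le> d" using S s by blast
      then show ?thesis using \<open>\<not> snd s\<close> unfolding leL_def by simp
    qed
    moreover have "(d,False) \<in> L" using d unfolding L_def by auto
    ultimately have "leL x (d,False)" using least by blast
    then show ?thesis unfolding leL_def by simp
  qed
  then show "x \<in> {x \<in> L. \<not> snd x \<longrightarrow> fst x \<le> d}" using xL by blast
next
  fix S x assume S: "S \<subseteq> {x \<in> L. \<not> snd x \<longrightarrow> fst x \<le> d}" and l: "is_glb L leL S x"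
  have xL: "x \<in> L" and lb: "\<forall>s\<in>S. leL x s" and great: "\<forall>y\<in>L. (\<forall>s\<in>S. leL y s) \<longrightarrow> leL y x"
    using l unfolding is_glb_def by blast+
  have "fst x \<le> d" if ns: "\<not> snd x"
  proof -
    have "\<exists>s\<in>S. \<not> snd s"
    proof (rule ccontr)
      assume A: "\<not> (\<exists>s\<in>S. \<not> snd s)"
      have "leL (fst x, True) s" if s: "s \<in> S" for s
        using A s lb unfolding leL_def by auto
      moreover have "(fst x, True) \<in> L" using xL unfolding L_def by (cases x) auto
      ultimately have "leL (fst x, True) x" using great by blast
      then show False using ns unfolding leL_def by simp
    qed
    then obtain s where s: "s \<in> S" "\<not> snd s" by blast
    then have "fst s \<le> d" using S by blast
    moreover have "fst x \<le> fst s" using lb s unfolding leL_def by blast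
    ultimately show ?thesis by simp
  qed
  then show "x \<in> {x \<in> L. \<not> snd x \<longrightarrow> fst x \<le> d}" using xL by blast
qed

lemma K_cs:
  assumes d: "0 \<le> d" "d \<le> 1"
  shows "complete_sublattice L leL {x \<in> L. snd x \<longrightarrow> d \<le> fst x}"
  unfolding complete_sublattice_def
proof (intro conjI allI impI)
  show "{x \<in> L. snd x \<longrightarrow> d \<le> fst x} \<subseteq> L" by blast
next
  fix S x assume S: "S \<subseteq> {x \<in> L. snd x \<longrightarrow> d \<le> fst x}" and l: "is_lub L leL S x"
  have xL: "x \<in> L" and ub: "\<forall>s\<in>S. leL s x" and least: "\<forall>y\<in>L. (\<forall>s\<in>S. leL s y) \<longrightarrow> leL x y"
    using l unfolding is_lub_def by blast+
  have "d \<le> fst x" if ns: "snd x"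
  proof -
    have "\<exists>s\<in>S. snd s"
    proof (rule ccontr)
      assume A: "\<not> (\<exists>s\<in>S. snd s)"
      have "leL s (fst x, False)" if s: "s \<in> S" for s
        using A s ub unfolding leL_def by auto
      moreover have "(fst x, False) \<in> L" using xL unfolding L_def by (cases x) auto
      ultimately have "leL x (fst x, False)" using least by blast
      then show False using ns unfolding leL_def by simp
    qed
    then obtain s where s: "s \<in> S" "snd s" by blast
    then have "d \<le> fst s" using S by blast
    moreover have "fst s \<le> fst x" using ub s unfolding leL_def by blast
    ultimately show ?thesis by simp
  qed
  then show "x \<in> {x \<in> L. snd x \<longrightarrow> d \<le> fst x}" using xL by blast
next
  fix S x assume S: "S \<subseteq> {x \<in> L. snd x \<longrightarrow> d \<le> fst x}" and l: "is_glb L leL S x"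
  have xL: "x \<in> L" and lb: "\<forall>s\<in>S. leL x s" and great: "\<forall>y\<in>L. (\<forall>s\<in>S. leL y s) \<longrightarrow> leL y x"
    using l unfolding is_glb_def by blast+
  have "d \<le> fst x" if ns: "snd x"
  proof -
    have "leL (d, True) s" if s: "s \<in> S" for s
    proof -
      have "snd s" using lb s ns unfolding leL_def by blast
      then have "d \<le> fst s" using S s by blast
      then show ?thesis using \<open>snd s\<close> unfolding leL_def by simp
    qed
    moreover have "(d,True) \<in> L" using d unfolding L_def by auto
    ultimately have "leL (d,True) x" using great by blast
    then show ?thesis unfolding leL_def by simp
  qed
  then show "x \<in> {x \<in> L. snd x \<longrightarrow> d \<le> fst x}" using xL by blast
qed

lemma core_F:
  assumes S: "complete_sublattice L leL S" and c: "0 < c" "c < 1" and a: "(c,False) \<notin> S"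
  shows "\<exists>T. complete_sublattice L leL T \<and> S \<subseteq> T \<and> (c,False) \<in> T \<and> T \<noteq> L"
proof -
  have SL: "S \<subseteq> L" using S unfolding complete_sublattice_def by blast
  have z: "(0,False) \<in> S" using cs_closed_lub[OF S _ lub_empty] by blast
  define SF where "SF = {u. (u,False) \<in> S}"
  have SF01: "SF \<subseteq> {0..1}" using SL unfolding SF_def L_def by auto
  have SFsup: "Sup Z \<in> SF" if Z: "Z \<subseteq> SF" "Z \<noteq> {}" for Z
  proof -
    have "is_lub L leL ((\<lambda>u. (u,False)) ` Z) (Sup Z, False)" using SF01 Z by (intro lub_layer) auto
    moreover have "(\<lambda>u. (u,False)) ` Z \<subseteq> S" using Z unfolding SF_def by auto
    ultimately show "Sup Z \<in> SF" using cs_closed_lub[OF S] unfolding SF_def by blast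
  qed
  have SFinf: "Inf Z \<in> SF" if Z: "Z \<subseteq> SF" "Z \<noteq> {}" for Z
  proof -
    have "is_glb L leL ((\<lambda>u. (u,False)) ` Z) (Inf Z, False)" using SF01 Z by (intro glb_layer) auto
    moreover have "(\<lambda>u. (u,False)) ` Z \<subseteq> S" using Z unfolding SF_def by auto
    ultimately show "Inf Z \<in> SF" using cs_closed_glb[OF S] unfolding SF_def by blast
  qed
  define Z1 where "Z1 = SF \<inter> {..c}"
  have Z1: "Z1 \<subseteq> SF" "Z1 \<noteq> {}" using z c unfolding Z1_def SF_def by auto
  have bZ1: "bdd_above Z1" using bdd01[of Z1] Z1 SF01 by auto
  define p where "p = Sup Z1"
  have pSF: "p \<in> SF" unfolding p_def using SFsup[OF Z1] .
  have "p \<le> c" unfolding p_def using Z1 unfolding Z1_def by (intro cSup_least) auto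
  moreover have "p \<noteq> c" using pSF a unfolding SF_def by auto
  ultimately have pc: "p < c" by simp
  have p0: "0 \<le> p" using pSF SF01 by auto
  have lowp: "u \<le> p" if "u \<in> SF" "u \<le> c" for u
    unfolding p_def using that bZ1 unfolding Z1_def by (intro cSup_upper) auto
  show ?thesis
  proof (cases "SF \<inter> {c..} = {}")
    case True
    define T where "T = {x \<in> L. \<not> snd x \<longrightarrow> fst x \<le> c}"
    have "complete_sublattice L leL T" unfolding T_def using c by (intro J_cs) auto
    moreover have "S \<subseteq> T"
    proof
      fix x assume x: "x \<in> S"
      have "fst x \<le> c" if "\<not> snd x"
      proof -
        have "fst x \<in> SF" using x that unfolding SF_def by (cases x) auto
        then show ?thesis using True by auto
      qed
      then show "x \<in> T" using x SL unfolding T_def by auto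
    qed
    moreover have "(c,False) \<in> T" using c unfolding T_def L_def by auto
    moreover have "(1,False) \<notin> T" using c unfolding T_def by auto
    then have "T \<noteq> L" unfolding L_def by auto
    ultimately show ?thesis by blast
  next
    case False
    define Z2 where "Z2 = SF \<inter> {c..}"
    have Z2: "Z2 \<subseteq> SF" "Z2 \<noteq> {}" using False unfolding Z2_def by auto
    have bZ2: "bdd_below Z2" using bdd01[of Z2] Z2 SF01 by auto
    define q where "q = Inf Z2"
    have qSF: "q \<in> SF" unfolding q_def using SFinf[OF Z2] .
    have "c \<le> q" unfolding q_def using Z2 unfolding Z2_def by (intro cInf_greatest) auto
    moreover have "q \<noteq> c" using qSF a unfolding SF_def by auto
    ultimately have cq: "c < q" by simp
    have q1: "q \<le> 1" using qSF SF01 by auto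
    have highq: "q \<le> u" if "u \<in> SF" "c \<le> u" for u
      unfolding q_def using that bZ2 unfolding Z2_def by (intro cInf_lower) auto
    have Fcase: "u \<le> p \<or> q \<le> u" if "u \<in> SF" for u
      using lowp highq that by (cases "u \<le> c") auto
    have gap: "fst x \<le> p \<or> q \<le> fst x" if x: "x \<in> S" for x
    proof (cases x)
      case (Pair u b)
      show ?thesis
      proof (cases b)
        case False
        then show ?thesis using Fcase[of u] x Pair unfolding SF_def by auto
      next
        case True
        have u01: "u \<in> {0..1}" using x Pair SL unfolding L_def by auto
        have "{(u,True),(q,False)} \<subseteq> S" using x Pair True qSF unfolding SF_def by auto
        then have "(min u q, False) \<in> S" using cs_closed_glb[OF S _ glb_TF[OF u01]] qSF SF01 by auto
        then show ?thesis using Fcase[of u] Pair unfolding SF_def by (cases "u \<le> q") auto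
      qed
    qed
    define C where "C = {0..p} \<union> {c} \<union> {q..1}"
    have Cc: "closed C" unfolding C_def by (intro closed_Un) auto
    have "complete_sublattice L leL (C \<times> UNIV)"
      using Cc p0 pc cq q1 c by (intro prod_cs) (auto simp: C_def)
    moreover have "S \<subseteq> C \<times> UNIV"
    proof
      fix x assume x: "x \<in> S"
      then have "fst x \<in> {0..1}" using SL unfolding L_def by auto
      then show "x \<in> C \<times> UNIV" using gap[OF x] unfolding C_def by (cases x) auto
    qed
    moreover have "(c,False) \<in> C \<times> UNIV" unfolding C_def by auto
    moreover have "((p+c)/2, False) \<notin> C \<times> UNIV" using pc cq unfolding C_def by auto
    then have "C \<times> UNIV \<noteq> L" using p0 pc c unfolding L_def by auto
    ultimately show ?thesis by blast
  qed
qed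

lemma core_T:
  assumes S: "complete_sublattice L leL S" and c: "0 < c" "c < 1" and a: "(c,True) \<notin> S"
  shows "\<exists>T. complete_sublattice L leL T \<and> S \<subseteq> T \<and> (c,True) \<in> T \<and> T \<noteq> L"
proof -
  have SL: "S \<subseteq> L" using S unfolding complete_sublattice_def by blast
  have z: "(1,True) \<in> S" using cs_closed_glb[OF S _ glb_empty] by blast
  define ST where "ST = {u. (u,True) \<in> S}"
  have ST01: "ST \<subseteq> {0..1}" using SL unfolding ST_def L_def by auto
  have STsup: "Sup Z \<in> ST" if Z: "Z \<subseteq> ST" "Z \<noteq> {}" for Z
  proof -
    have "is_lub L leL ((\<lambda>u. (u,True)) ` Z) (Sup Z, True)" using ST01 Z by (intro lub_layer) auto
    moreover have "(\<lambda>u. (u,True)) ` Z \<subseteq> S" using Z unfolding ST_def by auto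
    ultimately show "Sup Z \<in> ST" using cs_closed_lub[OF S] unfolding ST_def by blast
  qed
  have STinf: "Inf Z \<in> ST" if Z: "Z \<subseteq> ST" "Z \<noteq> {}" for Z
  proof -
    have "is_glb L leL ((\<lambda>u. (u,True)) ` Z) (Inf Z, True)" using ST01 Z by (intro glb_layer) auto
    moreover have "(\<lambda>u. (u,True)) ` Z \<subseteq> S" using Z unfolding ST_def by auto
    ultimately show "Inf Z \<in> ST" using cs_closed_glb[OF S] unfolding ST_def by blast
  qed
  define Z2 where "Z2 = ST \<inter> {c..}"
  have Z2: "Z2 \<subseteq> ST" "Z2 \<noteq> {}" using z c unfolding Z2_def ST_def by auto
  have bZ2: "bdd_below Z2" using bdd01[of Z2] Z2 ST01 by auto
  define q where "q = Inf Z2"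
  have qST: "q \<in> ST" unfolding q_def using STinf[OF Z2] .
  have "c \<le> q" unfolding q_def using Z2 unfolding Z2_def by (intro cInf_greatest) auto
  moreover have "q \<noteq> c" using qST a unfolding ST_def by auto
  ultimately have cq: "c < q" by simp
  have q1: "q \<le> 1" using qST ST01 by auto
  have highq: "q \<le> u" if "u \<in> ST" "c \<le> u" for u
    unfolding q_def using that bZ2 unfolding Z2_def by (intro cInf_lower) auto
  show ?thesis
  proof (cases "ST \<inter> {..c} = {}")
    case True
    define T where "T = {x \<in> L. snd x \<longrightarrow> c \<le> fst x}"
    have "complete_sublattice L leL T" unfolding T_def using c by (intro K_cs) auto
    moreover have "S \<subseteq> T"
    proof
      fix x assume x: "x \<in> S"
      have "c \<le> fst x" if "snd x"
      proof -
        have "fst x \<in> ST" using x that unfolding ST_def by (cases x) auto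
        then show ?thesis using True by auto
      qed
      then show "x \<in> T" using x SL unfolding T_def by auto
    qed
    moreover have "(c,True) \<in> T" using c unfolding T_def L_def by auto
    moreover have "(0,True) \<notin> T" using c unfolding T_def by auto
    then have "T \<noteq> L" unfolding L_def by auto
    ultimately show ?thesis by blast
  next
    case False
    define Z1 where "Z1 = ST \<inter> {..c}"
    have Z1: "Z1 \<subseteq> ST" "Z1 \<noteq> {}" using False unfolding Z1_def by auto
    have bZ1: "bdd_above Z1" using bdd01[of Z1] Z1 ST01 by auto
    define p where "p = Sup Z1"
    have pST: "p \<in> ST" unfolding p_def using STsup[OF Z1] .
    have "p \<le> c" unfolding p_def using Z1 unfolding Z1_def by (intro cSup_least) auto
    moreover have "p \<noteq> c" using pST a unfolding ST_def by auto
    ultimately have pc: "p < c" by simp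
    have p0: "0 \<le> p" using pST ST01 by auto
    have lowp: "u \<le> p" if "u \<in> ST" "u \<le> c" for u
      unfolding p_def using that bZ1 unfolding Z1_def by (intro cSup_upper) auto
    have Tcase: "u \<le> p \<or> q \<le> u" if "u \<in> ST" for u
      using lowp highq that by (cases "u \<le> c") auto
    have gap: "fst x \<le> p \<or> q \<le> fst x" if x: "x \<in> S" for x
    proof (cases x)
      case (Pair u b)
      show ?thesis
      proof (cases b)
        case True
        then show ?thesis using Tcase[of u] x Pair unfolding ST_def by auto
      next
        case False
        have u01: "u \<in> {0..1}" using x Pair SL unfolding L_def by auto
        have "{(u,False),(p,True)} \<subseteq> S" using x Pair False pST unfolding ST_def by auto
        then have "(max u p, True) \<in> S" using cs_closed_lub[OF S _ lub_FT[OF u01]] pST ST01 by auto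
        then show ?thesis using Tcase[of u] Pair unfolding ST_def by (cases "u \<le> p") auto
      qed
    qed
    define C where "C = {0..p} \<union> {c} \<union> {q..1}"
    have Cc: "closed C" unfolding C_def by (intro closed_Un) auto
    have "complete_sublattice L leL (C \<times> UNIV)"
      using Cc p0 pc cq q1 c by (intro prod_cs) (auto simp: C_def)
    moreover have "S \<subseteq> C \<times> UNIV"
    proof
      fix x assume x: "x \<in> S"
      then have "fst x \<in> {0..1}" using SL unfolding L_def by auto
      then show "x \<in> C \<times> UNIV" using gap[OF x] unfolding C_def by (cases x) auto
    qed
    moreover have "(c,True) \<in> C \<times> UNIV" unfolding C_def by auto
    moreover have "((p+c)/2, False) \<notin> C \<times> UNIV" using pc cq unfolding C_def by auto
    then have "C \<times> UNIV \<noteq> L" using p0 pc c unfolding L_def by auto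
    ultimately show ?thesis by blast
  qed
qed


lemma nongen:
  assumes aL: "a \<in> L" and a1: "a \<noteq> (0,True)" and a2: "a \<noteq> (1,False)"
  shows "non_generator L leL a"
  unfolding non_generator_def
proof (intro allI impI)
  fix X assume XL: "X \<subseteq> L" and g: "generated L leL (insert a X) = L"
  define S where "S = generated L leL X"
  have S: "complete_sublattice L leL S" unfolding S_def using gen_cs[OF XL] .
  have SL: "S \<subseteq> L" using S unfolding complete_sublattice_def by blast
  have XS: "X \<subseteq> S" unfolding S_def by (rule gen_sup)
  have aS: "a \<in> S"
  proof (rule ccontr)
    assume naS: "a \<notin> S"
    obtain c b where ab: "a = (c,b)" by (cases a)
    have c01: "0 \<le> c" "c \<le> 1" using aL ab unfolding L_def by auto
    have "\<exists>T. complete_sublattice L leL T \<and> S \<subseteq> T \<and> a \<in> T \<and> T \<noteq> L"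
    proof (cases b)
      case True
      have "(1,True) \<in> S" using cs_closed_glb[OF S _ glb_empty] by blast
      then have "c \<noteq> 1" using naS ab True by auto
      moreover have "c \<noteq> 0" using a1 ab True by auto
      ultimately show ?thesis using core_T[OF S, of c] c01 naS ab True by auto
    next
      case False
      have "(0,False) \<in> S" using cs_closed_lub[OF S _ lub_empty] by blast
      then have "c \<noteq> 0" using naS ab False by auto
      moreover have "c \<noteq> 1" using a2 ab False by auto
      ultimately show ?thesis using core_F[OF S, of c] c01 naS ab False by auto
    qed
    then obtain T where T: "complete_sublattice L leL T" "S \<subseteq> T" "a \<in> T" "T \<noteq> L" by blast
    have "generated L leL (insert a X) \<subseteq> T" using gen_sub[OF T(1)] T XS by blast
    then have "L \<subseteq> T" using g by simp
    moreover have "T \<subseteq> L" using T(1) unfolding complete_sublattice_def by blast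
    ultimately show False using T(4) by blast
  qed
  have "generated L leL (insert a X) \<subseteq> S" using gen_sub[OF S] aS XS by blast
  then show "generated L leL X = L" using g SL unfolding S_def by blast
qed

lemma not_nongen_0T: "\<not> non_generator L leL (0,True)"
proof
  assume ng: "non_generator L leL (0,True)"
  define X where "X = {0..1::real} \<times> {False}"
  have XL: "X \<subseteq> L" unfolding X_def L_def by auto
  have iXL: "insert (0,True) X \<subseteq> L" using XL unfolding L_def by auto
  have "generated L leL (insert (0,True) X) = L"
  proof
    show "generated L leL (insert (0,True) X) \<subseteq> L" using gen_sub[OF cs_full iXL] .
    show "L \<subseteq> generated L leL (insert (0,True) X)"
    proof
      fix x assume x: "x \<in> L"
      obtain u b where ub: "x = (u,b)" by (cases x)
      have u01: "u \<in> {0..1}" using x ub unfolding L_def by auto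
      have sub: "{(u,False),(0,True)} \<subseteq> generated L leL (insert (0,True) X)"
        using gen_sup[of "insert (0,True) X" L leL] u01 unfolding X_def by auto
      show "x \<in> generated L leL (insert (0,True) X)"
      proof (cases b)
        case True
        have "(max u 0, True) \<in> generated L leL (insert (0,True) X)"
          using cs_closed_lub[OF gen_cs[OF iXL] sub lub_FT[OF u01]] by simp
        then show ?thesis using ub True u01 by (cases "u \<le> 0") auto
      next
        case False
        then show ?thesis using sub ub by auto
      qed
    qed
  qed
  then have "generated L leL X = L" using ng XL unfolding non_generator_def by blast
  moreover have "X \<subseteq> {x \<in> L. snd x \<longrightarrow> 1 \<le> fst x}" unfolding X_def L_def by auto
  then have "generated L leL X \<subseteq> {x \<in> L. snd x \<longrightarrow> 1 \<le> fst x}"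
    using gen_sub[OF K_cs[of 1]] by simp
  moreover have "(0::real,True) \<in> L" unfolding L_def by auto
  ultimately show False by auto
qed

lemma not_nongen_1F: "\<not> non_generator L leL (1,False)"
proof
  assume ng: "non_generator L leL (1,False)"
  define X where "X = {0..1::real} \<times> {True}"
  have XL: "X \<subseteq> L" unfolding X_def L_def by auto
  have iXL: "insert (1,False) X \<subseteq> L" using XL unfolding L_def by auto
  have "generated L leL (insert (1,False) X) = L"
  proof
    show "generated L leL (insert (1,False) X) \<subseteq> L" using gen_sub[OF cs_full iXL] .
    show "L \<subseteq> generated L leL (insert (1,False) X)"
    proof
      fix x assume x: "x \<in> L"
      obtain u b where ub: "x = (u,b)" by (cases x)
      have u01: "u \<in> {0..1}" using x ub unfolding L_def by auto
      have sub: "{(u,True),(1,False)} \<subseteq> generated L leL (insert (1,False) X)"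
        using gen_sup[of "insert (1,False) X" L leL] u01 unfolding X_def by auto
      show "x \<in> generated L leL (insert (1,False) X)"
      proof (cases b)
        case False
        have "(min u 1, False) \<in> generated L leL (insert (1,False) X)"
          using cs_closed_glb[OF gen_cs[OF iXL] sub glb_TF[OF u01]] by simp
        then show ?thesis using ub False u01 by (cases "u \<le> 1") auto
      next
        case True
        then show ?thesis using sub ub by auto
      qed
    qed
  qed
  then have "generated L leL X = L" using ng XL unfolding non_generator_def by blast
  moreover have "X \<subseteq> {x \<in> L. \<not> snd x \<longrightarrow> fst x \<le> 0}" unfolding X_def L_def by auto
  then have "generated L leL X \<subseteq> {x \<in> L. \<not> snd x \<longrightarrow> fst x \<le> 0}"
    using gen_sub[OF J_cs[of 0]] by simp
  moreover have "(1::real,False) \<in> L" unfolding L_def by auto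
  ultimately show False by auto
qed

lemma part1: "a \<in> L \<Longrightarrow> non_generator L leL a \<longleftrightarrow> a \<noteq> (0, True) \<and> a \<noteq> (1, False)"
  using nongen not_nongen_0T not_nongen_1F by blast

lemma glb_0T: "is_glb L leL ((\<lambda>u. (u,True)) ` {0<..<1}) (0,True)"
proof -
  have "is_glb L leL ((\<lambda>u. (u,True)) ` {0<..<1::real}) (Inf {0<..<1::real}, True)"
    by (rule glb_layer) auto
  moreover have "Inf {0<..<1::real} = 0" by (rule cInf_greaterThanLessThan) simp
  ultimately show ?thesis by simp
qed
lemma lub_1F: "is_lub L leL ((\<lambda>u. (u,False)) ` {0<..<1}) (1,False)"
proof -
  have "is_lub L leL ((\<lambda>u. (u,False)) ` {0<..<1::real}) (Sup {0<..<1::real}, False)"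
    by (rule lub_layer) auto
  moreover have "Sup {0<..<1::real} = 1" by (rule cSup_greaterThanLessThan) simp
  ultimately show ?thesis by simp
qed

theorem proposition5:
  shows "(\<forall>a\<in>L. non_generator L leL a \<longleftrightarrow> a \<noteq> (0, True) \<and> a \<noteq> (1, False))
    \<and> \<not> complete_sublattice L leL {a\<in>L. non_generator L leL a}
    \<and> generated L leL {a\<in>L. non_generator L leL a} = L"
proof (intro conjI)
  show P1: "\<forall>a\<in>L. non_generator L leL a \<longleftrightarrow> a \<noteq> (0, True) \<and> a \<noteq> (1, False)"
    using part1 by blast
  have subT: "(\<lambda>u. (u,True)) ` {0<..<1} \<subseteq> {a\<in>L. non_generator L leL a}"
  proof
    fix x assume "x \<in> (\<lambda>u. (u,True)) ` {0<..<(1::real)}"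
    then obtain u where u: "x = (u,True)" "0 < u" "u < 1" by auto
    then have xL: "x \<in> L" unfolding L_def by auto
    have "non_generator L leL x" using part1[OF xL] u by simp
    then show "x \<in> {a\<in>L. non_generator L leL a}" using xL by blast
  qed
  have subF: "(\<lambda>u. (u,False)) ` {0<..<1} \<subseteq> {a\<in>L. non_generator L leL a}"
  proof
    fix x assume "x \<in> (\<lambda>u. (u,False)) ` {0<..<(1::real)}"
    then obtain u where u: "x = (u,False)" "0 < u" "u < 1" by auto
    then have xL: "x \<in> L" unfolding L_def by auto
    have "non_generator L leL x" using part1[OF xL] u by simp
    then show "x \<in> {a\<in>L. non_generator L leL a}" using xL by blast
  qed
  show "\<not> complete_sublattice L leL {a\<in>L. non_generator L leL a}"
  proof
    assume "complete_sublattice L leL {a\<in>L. non_generator L leL a}"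
    then have "(0,True) \<in> {a\<in>L. non_generator L leL a}"
      using cs_closed_glb[OF _ subT glb_0T] by blast
    then show False using not_nongen_0T by blast
  qed
  have GL: "{a\<in>L. non_generator L leL a} \<subseteq> L" by blast
  let ?G = "generated L leL {a\<in>L. non_generator L leL a}"
  show "?G = L"
  proof
    show "?G \<subseteq> L" using gen_sub[OF cs_full GL] .
    show "L \<subseteq> ?G"
    proof
      fix x assume x: "x \<in> L"
      have gs: "{a\<in>L. non_generator L leL a} \<subseteq> ?G" by (rule gen_sup)
      have "(0,True) \<in> ?G" using cs_closed_glb[OF gen_cs[OF GL] _ glb_0T] subT gs by blast
      moreover have "(1,False) \<in> ?G" using cs_closed_lub[OF gen_cs[OF GL] _ lub_1F] subF gs by blast
      moreover have "x \<in> ?G" if "x \<noteq> (0,True)" "x \<noteq> (1,False)"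
      proof -
        have "non_generator L leL x" using part1[OF x] that by blast
        then show ?thesis using gs x by blast
      qed
      ultimately show "x \<in> ?G" by blast
    qed
  qed
qed

end
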